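(* Let $\delta\ge 2$ be an integer and let $G$ be a connected graph of even order $n$ with minimum degree $\delta$, where $n\ge \max\{7\delta-7,\ \tfrac14\delta^2+\tfrac12\delta+6\}$. If $$\rho_Q(G)\ \ge\ \rho_Q\big(K_\delta\vee(K_{n-2\delta+1}\cup(\delta-1)K_1)\big),$$ then $G$ contains an even factor, unless $G\cong K_\delta\vee(K_{n-2\delta+1}\cup(\delta-1)K_1)$.
   Context: All graphs are finite, simple and undirected. An even factor of a graph $G$ is a spanning subgraph $F$ of $G$ such that $d_F(v)$ is a nonzero even number for every vertex $v\in V(G)$. The signless Laplacian matrix is $Q(G)=A(G)+D(G)$, where $A(G)$ is the adjacency matrix and $D(G)$ the diagonal matrix of vertex degrees; $\rho_Q(G)$ denotes the largest eigenvalue of $Q(G)$. $K_m$ is the complete graph on $m$ vertices, $G_1\cup G_2$ is the disjoint union, $tK_1$ is the edgeless graph on $t$ vertices, and $G_1\vee G_2$ (join) is obtained from $G_1\cup G_2$ by adding all edges between $V(G_1)$ and $V(G_2)$. *)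

theory Defs
  imports Complex_Main
begin

definition graph :: "'a set \<Rightarrow> ('a \<Rightarrow> 'a \<Rightarrow> bool) \<Rightarrow> bool" where
  "graph V E \<longleftrightarrow> finite V \<and> (\<forall>u v. E u v \<longrightarrow> u \<in> V \<and> v \<in> V \<and> u \<noteq> v \<and> E v u)"

definition degree :: "'a set \<Rightarrow> ('a \<Rightarrow> 'a \<Rightarrow> bool) \<Rightarrow> 'a \<Rightarrow> nat" where
  "degree V E v = card {u \<in> V. E v u}"

definition min_degree :: "'a set \<Rightarrow> ('a \<Rightarrow> 'a \<Rightarrow> bool) \<Rightarrow> nat" where
  "min_degree V E = Min (degree V E ` V)"

definition connected_graph :: "'a set \<Rightarrow> ('a \<Rightarrow> 'a \<Rightarrow> bool) \<Rightarrow> bool" where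
  "connected_graph V E \<longleftrightarrow> V \<noteq> {} \<and> (\<forall>u\<in>V. \<forall>v\<in>V. E\<^sup>*\<^sup>* u v)"

definition has_even_factor :: "'a set \<Rightarrow> ('a \<Rightarrow> 'a \<Rightarrow> bool) \<Rightarrow> bool" where
  "has_even_factor V E \<longleftrightarrow> (\<exists>F. (\<forall>u v. F u v \<longrightarrow> E u v) \<and> (\<forall>u v. F u v \<longrightarrow> F v u) \<and>
       (\<forall>v\<in>V. degree V F v \<noteq> 0 \<and> even (degree V F v)))"

definition signless_laplacian :: "'a set \<Rightarrow> ('a \<Rightarrow> 'a \<Rightarrow> bool) \<Rightarrow> 'a \<Rightarrow> 'a \<Rightarrow> real" where
  "signless_laplacian V E u v =
     (if E u v then 1 else 0) + (if u = v then real (degree V E u) else 0)"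

definition Q_eigenvalue :: "'a set \<Rightarrow> ('a \<Rightarrow> 'a \<Rightarrow> bool) \<Rightarrow> real \<Rightarrow> bool" where
  "Q_eigenvalue V E \<mu> \<longleftrightarrow> (\<exists>x :: 'a \<Rightarrow> real. (\<exists>v\<in>V. x v \<noteq> 0) \<and>
      (\<forall>u\<in>V. (\<Sum>w\<in>V. signless_laplacian V E u w * x w) = \<mu> * x u))"

text \<open>Largest eigenvalue of Q (real symmetric, so all eigenvalues are real).\<close>
definition rho_Q :: "'a set \<Rightarrow> ('a \<Rightarrow> 'a \<Rightarrow> bool) \<Rightarrow> real" where
  "rho_Q V E = Max {\<mu>. Q_eigenvalue V E \<mu>}"

definition graph_iso :: "'a set \<Rightarrow> ('a \<Rightarrow> 'a \<Rightarrow> bool) \<Rightarrow> 'b set \<Rightarrow> ('b \<Rightarrow> 'b \<Rightarrow> bool) \<Rightarrow> bool" where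
  "graph_iso V E W F \<longleftrightarrow> (\<exists>f. bij_betw f V W \<and> (\<forall>u\<in>V. \<forall>v\<in>V. E u v \<longleftrightarrow> F (f u) (f v)))"

text \<open>K_d \<or> (K_{n-2d+1} \<union> (d-1)K_1) on vertices {0..<n}:
  vertices 0..d-1 form K_d, vertices d..n-d form K_{n-2d+1},
  vertices n-d+1..n-1 are the d-1 isolated vertices of the union.\<close>
definition extremal_V :: "nat \<Rightarrow> nat set" where
  "extremal_V n = {0..<n}"

definition extremal_E :: "nat \<Rightarrow> nat \<Rightarrow> nat \<Rightarrow> nat \<Rightarrow> bool" where
  "extremal_E n d i j \<longleftrightarrow> i < n \<and> j < n \<and> i \<noteq> j \<and>
     (i < d \<or> j < d \<or> (i < n - d + 1 \<and> j < n - d + 1))"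

end

theory Submission
  imports Defs "Jordan_Normal_Form.Char_Poly"
begin


definition eig_idx :: "nat \<Rightarrow> (nat \<Rightarrow> nat \<Rightarrow> 'b::comm_ring_1) \<Rightarrow> 'b \<Rightarrow> bool" where
  "eig_idx n a \<mu> \<longleftrightarrow> (\<exists>z. (\<exists>i<n. z i \<noteq> 0) \<and> (\<forall>i<n. (\<Sum>j<n. a i j * z j) = \<mu> * z i))"

lemma eig_idx_eigenvalue:
  fixes a :: "nat \<Rightarrow> nat \<Rightarrow> 'b::field"
  assumes "eig_idx n a \<mu>"
  shows "eigenvalue (mat n n (\<lambda>(i,j). a i j)) \<mu>"
proof -
  obtain z where z0: "\<exists>i<n. z i \<noteq> 0" and ze: "\<forall>i<n. (\<Sum>j<n. a i j * z j) = \<mu> * z i"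
    using assms unfolding eig_idx_def by blast
  define v where "v = vec n z"
  let ?A = "mat n n (\<lambda>(i,j). a i j)"
  have "eigenvector ?A v \<mu>" unfolding eigenvector_def
  proof (intro conjI)
    show "v \<in> carrier_vec (dim_row ?A)" by (simp add: v_def)
    show "v \<noteq> 0\<^sub>v (dim_row ?A)"
    proof
      assume h: "v = 0\<^sub>v (dim_row ?A)"
      obtain i where i: "i < n" "z i \<noteq> 0" using z0 by blast
      have "v $ i = 0" using h i by simp
      then show False using i by (simp add: v_def)
    qed
    show "?A *\<^sub>v v = \<mu> \<cdot>\<^sub>v v"
    proof (rule eq_vecI)
      show "dim_vec (?A *\<^sub>v v) = dim_vec (\<mu> \<cdot>\<^sub>v v)" by (simp add: v_def)
      fix i assume "i < dim_vec (\<mu> \<cdot>\<^sub>v v)"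
      then have i: "i < n" by (simp add: v_def)
      have "(?A *\<^sub>v v) $ i = (\<Sum>j = 0..<n. a i j * z j)"
        using i by (simp add: v_def scalar_prod_def)
      also have "\<dots> = \<mu> * z i" using ze i by (simp add: atLeast0LessThan)
      finally show "(?A *\<^sub>v v) $ i = (\<mu> \<cdot>\<^sub>v v) $ i" using i by (simp add: v_def)
    qed
  qed
  then show ?thesis unfolding eigenvalue_def by blast
qed

lemma eig_idx_finite:
  fixes a :: "nat \<Rightarrow> nat \<Rightarrow> real"
  shows "finite {\<mu>. eig_idx n a \<mu>}"
proof -
  let ?A = "mat n n (\<lambda>(i,j). a i j)"
  have A: "?A \<in> carrier_mat n n" by simp
  have "coeff (char_poly ?A) n = 1" using degree_monic_char_poly[OF A] by simp
  then have nz: "char_poly ?A \<noteq> 0" by auto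
  have "{\<mu>. eig_idx n a \<mu>} \<subseteq> {\<mu>. poly (char_poly ?A) \<mu> = 0}"
    using eig_idx_eigenvalue eigenvalue_root_char_poly[OF A] by blast
  then show ?thesis using poly_roots_finite[OF nz] finite_subset by blast
qed

lemma eig_idx_exists_complex:
  fixes a :: "nat \<Rightarrow> nat \<Rightarrow> complex"
  assumes n0: "0 < n"
  shows "\<exists>c. eig_idx n a c"
proof -
  let ?A = "mat n n (\<lambda>(i,j). a i j)"
  have A: "?A \<in> carrier_mat n n" by simp
  have dg: "Polynomial.degree (char_poly ?A) = n" using degree_monic_char_poly[OF A] by simp
  have "\<not> constant (poly (char_poly ?A))" unfolding constant_degree using dg n0 by simp
  then obtain c where "poly (char_poly ?A) c = 0" using fundamental_theorem_of_algebra by blast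
  then have "eigenvalue ?A c" using eigenvalue_root_char_poly[OF A] by simp
  then obtain v where ev: "eigenvector ?A v c" unfolding eigenvalue_def by blast
  then have vc: "v \<in> carrier_vec n" and v0: "v \<noteq> 0\<^sub>v n" and ve: "?A *\<^sub>v v = c \<cdot>\<^sub>v v"
    unfolding eigenvector_def by auto
  have "\<exists>i<n. v $ i \<noteq> 0"
  proof (rule ccontr)
    assume "\<not> (\<exists>i<n. v $ i \<noteq> 0)"
    then have "v = 0\<^sub>v n" using vc by (intro eq_vecI) auto
    then show False using v0 by simp
  qed
  moreover have "\<forall>i<n. (\<Sum>j<n. a i j * v $ j) = c * v $ i"
  proof (intro allI impI)
    fix i assume i: "i < n"
    have "(?A *\<^sub>v v) $ i = (c \<cdot>\<^sub>v v) $ i" using ve by simp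
    moreover have "(?A *\<^sub>v v) $ i = (\<Sum>j = 0..<n. a i j * v $ j)"
      using i vc by (simp add: scalar_prod_def)
    moreover have "(c \<cdot>\<^sub>v v) $ i = c * v $ i" using i vc by simp
    ultimately show "(\<Sum>j<n. a i j * v $ j) = c * v $ i" by (simp add: atLeast0LessThan)
  qed
  ultimately show ?thesis unfolding eig_idx_def by blast
qed


lemma sym_real_eig:
  fixes a :: "nat \<Rightarrow> nat \<Rightarrow> real"
  assumes sym: "\<And>i j. i < n \<Longrightarrow> j < n \<Longrightarrow> a i j = a j i" and n0: "0 < n"
  shows "\<exists>\<mu>. eig_idx n a \<mu>"
proof -
  obtain c where "eig_idx n (\<lambda>i j. complex_of_real (a i j)) c" using eig_idx_exists_complex[OF n0] by blast
  then obtain v where v0: "\<exists>i<n. v i \<noteq> 0"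
    and ve: "\<forall>i<n. (\<Sum>j<n. complex_of_real (a i j) * v j) = c * v i"
    unfolding eig_idx_def by blast
  define s where "s = (\<Sum>i<n. \<Sum>j<n. cnj (v i) * (complex_of_real (a i j) * v j))"
  define N where "N = (\<Sum>i<n. (cmod (v i))\<^sup>2)"
  have s1: "s = c * complex_of_real N"
  proof -
    have "s = (\<Sum>i<n. cnj (v i) * (\<Sum>j<n. complex_of_real (a i j) * v j))"
      unfolding s_def by (simp add: sum_distrib_left)
    also have "\<dots> = (\<Sum>i<n. cnj (v i) * (c * v i))" using ve by (intro sum.cong) auto
    also have "\<dots> = c * (\<Sum>i<n. v i * cnj (v i))" by (simp add: sum_distrib_left algebra_simps)
    also have "(\<Sum>i<n. v i * cnj (v i)) = complex_of_real N"
      unfolding N_def of_real_sum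
    proof (intro sum.cong refl)
      fix x show "v x * cnj (v x) = complex_of_real ((cmod (v x))\<^sup>2)" by (rule complex_norm_square[symmetric])
    qed
    finally show ?thesis .
  qed
  have s2: "cnj s = s"
  proof -
    have "cnj s = (\<Sum>i<n. \<Sum>j<n. v i * (complex_of_real (a i j) * cnj (v j)))"
      unfolding s_def by simp
    also have "\<dots> = (\<Sum>j<n. \<Sum>i<n. v i * (complex_of_real (a i j) * cnj (v j)))" by (rule sum.swap)
    also have "\<dots> = s" unfolding s_def
    proof (intro sum.cong refl)
      fix x y assume "x \<in> {..<n}" "y \<in> {..<n}"
      then show "v y * (complex_of_real (a y x) * cnj (v x)) = cnj (v x) * (complex_of_real (a x y) * v y)"
        using sym by (simp add: algebra_simps)
    qed
    finally show ?thesis .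
  qed
  obtain k where k: "k < n" "v k \<noteq> 0" using v0 by blast
  have Npos: "0 < N"
  proof -
    have "(cmod (v k))\<^sup>2 \<le> N" unfolding N_def using k by (intro member_le_sum) auto
    moreover have "0 < (cmod (v k))\<^sup>2" using k by simp
    ultimately show ?thesis by linarith
  qed
  have "cnj s = cnj c * complex_of_real N" using s1 by simp
  then have "cnj c * complex_of_real N = c * complex_of_real N" using s1 s2 by simp
  then have cc: "cnj c = c" using Npos by simp
  have "Im (cnj c) = Im c" using cc by simp
  then have imc: "Im c = 0" by simp
  define \<mu> where "\<mu> = Re c"
  have reeq: "(\<Sum>j<n. a i j * Re (v j)) = \<mu> * Re (v i)" if i: "i < n" for i
  proof -
    have "Re (\<Sum>j<n. complex_of_real (a i j) * v j) = Re (c * v i)" using ve i by simp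
    then show ?thesis using imc unfolding \<mu>_def by (simp add: Re_sum)
  qed
  have imeq: "(\<Sum>j<n. a i j * Im (v j)) = \<mu> * Im (v i)" if i: "i < n" for i
  proof -
    have "Im (\<Sum>j<n. complex_of_real (a i j) * v j) = Im (c * v i)" using ve i by simp
    then show ?thesis using imc unfolding \<mu>_def by (simp add: Im_sum)
  qed
  show ?thesis
  proof (cases "Re (v k) = 0")
    case True
    have "Im (v k) \<noteq> 0"
    proof
      assume "Im (v k) = 0"
      then have "v k = 0" using True by (intro complex_eqI) auto
      then show False using k by simp
    qed
    show ?thesis unfolding eig_idx_def
    proof (intro exI[of _ \<mu>] exI[of _ "\<lambda>j. Im (v j)"] conjI)
      show "\<exists>i<n. Im (v i) \<noteq> 0" using k \<open>Im (v k) \<noteq> 0\<close> by blast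
      show "\<forall>i<n. (\<Sum>j<n. a i j * Im (v j)) = \<mu> * Im (v i)" using imeq by blast
    qed
  next
    case False
    show ?thesis unfolding eig_idx_def
    proof (intro exI[of _ \<mu>] exI[of _ "\<lambda>j. Re (v j)"] conjI)
      show "\<exists>i<n. Re (v i) \<noteq> 0" using k False by blast
      show "\<forall>i<n. (\<Sum>j<n. a i j * Re (v j)) = \<mu> * Re (v i)" using reeq by blast
    qed
  qed
qed


lemma eig_transl:
  assumes bij: "bij_betw f {..<n} V"
  shows "(\<exists>x. (\<exists>v\<in>V. x v \<noteq> 0) \<and> (\<forall>u\<in>V. (\<Sum>w\<in>V. M u w * x w) = \<mu> * x u))
         \<longleftrightarrow> eig_idx n (\<lambda>i j. M (f i) (f j)) \<mu>"
proof
  assume "\<exists>x. (\<exists>v\<in>V. x v \<noteq> 0) \<and> (\<forall>u\<in>V. (\<Sum>w\<in>V. M u w * x w) = \<mu> * x u)"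
  then obtain x where x0: "\<exists>v\<in>V. x v \<noteq> 0" and xe: "\<forall>u\<in>V. (\<Sum>w\<in>V. M u w * x w) = \<mu> * x u" by blast
  have img: "f ` {..<n} = V" using bij by (simp add: bij_betw_def)
  obtain v where v: "v \<in> V" "x v \<noteq> 0" using x0 by blast
  then have "v \<in> f ` {..<n}" using img by simp
  then obtain i where i: "i < n" "f i = v" by auto
  have "\<forall>i<n. (\<Sum>j<n. M (f i) (f j) * x (f j)) = \<mu> * x (f i)"
  proof (intro allI impI)
    fix i assume i: "i < n"
    have "(\<Sum>j<n. M (f i) (f j) * x (f j)) = (\<Sum>w\<in>V. M (f i) w * x w)"
      using sum.reindex_bij_betw[OF bij, of "\<lambda>w. M (f i) w * x w"] by simp
    also have "\<dots> = \<mu> * x (f i)" using xe i img by auto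
    finally show "(\<Sum>j<n. M (f i) (f j) * x (f j)) = \<mu> * x (f i)" .
  qed
  then show "eig_idx n (\<lambda>i j. M (f i) (f j)) \<mu>" unfolding eig_idx_def
    by (intro exI[of _ "\<lambda>i. x (f i)"] conjI) (use i v in auto)
next
  assume "eig_idx n (\<lambda>i j. M (f i) (f j)) \<mu>"
  then obtain z where z0: "\<exists>i<n. z i \<noteq> 0" and ze: "\<forall>i<n. (\<Sum>j<n. M (f i) (f j) * z j) = \<mu> * z i"
    unfolding eig_idx_def by blast
  define g where "g = inv_into {..<n} f"
  define x where "x w = z (g w)" for w
  have inj: "inj_on f {..<n}" using bij by (simp add: bij_betw_def)
  have img: "f ` {..<n} = V" using bij by (simp add: bij_betw_def)
  have xf: "x (f i) = z i" if "i < n" for i unfolding x_def g_def using inj that by simp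
  obtain i where i: "i < n" "z i \<noteq> 0" using z0 by blast
  have "f i \<in> V" using img i by auto
  moreover have "x (f i) \<noteq> 0" using xf i by simp
  moreover have "\<forall>u\<in>V. (\<Sum>w\<in>V. M u w * x w) = \<mu> * x u"
  proof
    fix u assume "u \<in> V"
    then have "u \<in> f ` {..<n}" using img by simp
    then obtain k where k: "k < n" "u = f k" by auto
    have "(\<Sum>w\<in>V. M u w * x w) = (\<Sum>j<n. M u (f j) * x (f j))"
      using sum.reindex_bij_betw[OF bij, of "\<lambda>w. M u w * x w"] by simp
    also have "\<dots> = (\<Sum>j<n. M (f k) (f j) * z j)" using k xf by (intro sum.cong) auto
    also have "\<dots> = \<mu> * x u" using ze k xf by simp
    finally show "(\<Sum>w\<in>V. M u w * x w) = \<mu> * x u" .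
  qed
  ultimately show "\<exists>x. (\<exists>v\<in>V. x v \<noteq> 0) \<and> (\<forall>u\<in>V. (\<Sum>w\<in>V. M u w * x w) = \<mu> * x u)"
    by (intro exI[of _ x] conjI bexI[of _ "f i"])
qed

lemma obtain_bij: assumes "finite V" obtains f where "bij_betw f {..<card V} V"
  using ex_bij_betw_nat_finite[OF assms] by (auto simp: atLeast0LessThan)

lemma Q_eig_finite:
  assumes fin: "finite V"
  shows "finite {\<mu>. Q_eigenvalue V E \<mu>}"
proof -
  obtain f where bij: "bij_betw f {..<card V} V" using obtain_bij[OF fin] by blast
  have "{\<mu>. Q_eigenvalue V E \<mu>} = {\<mu>. eig_idx (card V) (\<lambda>i j. signless_laplacian V E (f i) (f j)) \<mu>}"
    unfolding Defs.Q_eigenvalue_def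
  proof (rule Collect_cong)
    fix \<mu> show "(\<exists>x. (\<exists>v\<in>V. x v \<noteq> 0) \<and> (\<forall>u\<in>V. (\<Sum>w\<in>V. signless_laplacian V E u w * x w) = \<mu> * x u))
      = eig_idx (card V) (\<lambda>i j. signless_laplacian V E (f i) (f j)) \<mu>" by (rule eig_transl[OF bij])
  qed
  then show ?thesis using eig_idx_finite by simp
qed

lemma Q_eig_exists:
  assumes fin: "finite V" and ne: "V \<noteq> {}" and Esym: "\<And>x y. E x y \<Longrightarrow> E y x"
  shows "\<exists>\<mu>. Q_eigenvalue V E \<mu>"
proof -
  obtain f where bij: "bij_betw f {..<card V} V" using obtain_bij[OF fin] by blast
  have n0: "0 < card V" using fin ne by (simp add: card_gt_0_iff)
  have "\<exists>\<mu>. eig_idx (card V) (\<lambda>i j. signless_laplacian V E (f i) (f j)) \<mu>"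
  proof (rule sym_real_eig[OF _ n0])
    fix i j
    show "signless_laplacian V E (f i) (f j) = signless_laplacian V E (f j) (f i)"
      unfolding Defs.signless_laplacian_def using Esym by auto
  qed
  then obtain \<mu> where "eig_idx (card V) (\<lambda>i j. signless_laplacian V E (f i) (f j)) \<mu>" by blast
  then have "Q_eigenvalue V E \<mu>" unfolding Defs.Q_eigenvalue_def eig_transl[OF bij] .
  then show ?thesis by blast
qed

lemma rho_props:
  assumes fin: "finite V" and ne: "V \<noteq> {}" and Esym: "\<And>x y. E x y \<Longrightarrow> E y x"
  shows "Q_eigenvalue V E (rho_Q V E)" "\<And>\<mu>. Q_eigenvalue V E \<mu> \<Longrightarrow> \<mu> \<le> rho_Q V E"
proof -
  have f: "finite {\<mu>. Q_eigenvalue V E \<mu>}" by (rule Q_eig_finite[OF fin])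
  have n: "{\<mu>. Q_eigenvalue V E \<mu>} \<noteq> {}" using Q_eig_exists[of V E, OF fin ne Esym] by blast
  show "Q_eigenvalue V E (rho_Q V E)" unfolding Defs.rho_Q_def using Max_in[OF f n] by simp
  show "\<And>\<mu>. Q_eigenvalue V E \<mu> \<Longrightarrow> \<mu> \<le> rho_Q V E" unfolding Defs.rho_Q_def using Max_ge[OF f] by simp
qed




definition tjoin :: "'a set \<Rightarrow> ('a \<Rightarrow> 'a \<Rightarrow> bool) \<Rightarrow> ('a \<Rightarrow> 'a \<Rightarrow> bool) \<Rightarrow> bool" where
  "tjoin V E J \<longleftrightarrow> (\<forall>x y. J x y \<longrightarrow> E x y) \<and> (\<forall>x y. J x y \<longrightarrow> J y x) \<and>
     (\<forall>x\<in>V. even (Defs.degree V J x) = even (Defs.degree V E x))"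

definition szJ :: "'a set \<Rightarrow> ('a \<Rightarrow> 'a \<Rightarrow> bool) \<Rightarrow> nat" where
  "szJ V J = (\<Sum>x\<in>V. Defs.degree V J x)"

definition badv :: "'a set \<Rightarrow> ('a \<Rightarrow> 'a \<Rightarrow> bool) \<Rightarrow> ('a \<Rightarrow> 'a \<Rightarrow> bool) \<Rightarrow> 'a \<Rightarrow> bool" where
  "badv V E J x \<longleftrightarrow> x \<in> V \<and> (\<forall>y\<in>V. E x y \<longrightarrow> J x y)"

definition nbad :: "'a set \<Rightarrow> ('a \<Rightarrow> 'a \<Rightarrow> bool) \<Rightarrow> ('a \<Rightarrow> 'a \<Rightarrow> bool) \<Rightarrow> nat" where
  "nbad V E J = card {x\<in>V. badv V E J x}"

definition meas :: "'a set \<Rightarrow> ('a \<Rightarrow> 'a \<Rightarrow> bool) \<Rightarrow> ('a \<Rightarrow> 'a \<Rightarrow> bool) \<Rightarrow> nat" where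
  "meas V E J = szJ V J * (card V + 1) + nbad V E J"

definition optJ :: "'a set \<Rightarrow> ('a \<Rightarrow> 'a \<Rightarrow> bool) \<Rightarrow> ('a \<Rightarrow> 'a \<Rightarrow> bool) \<Rightarrow> bool" where
  "optJ V E J \<longleftrightarrow> tjoin V E J \<and> (\<forall>J'. tjoin V E J' \<longrightarrow> meas V E J \<le> meas V E J')"

definition xr :: "('a \<Rightarrow> 'a \<Rightarrow> bool) \<Rightarrow> ('a \<Rightarrow> 'a \<Rightarrow> bool) \<Rightarrow> 'a \<Rightarrow> 'a \<Rightarrow> bool" where
  "xr J C = (\<lambda>x y. J x y \<noteq> C x y)"

definition es :: "('a \<times> 'a) list \<Rightarrow> 'a \<Rightarrow> 'a \<Rightarrow> bool" where
  "es ps = (\<lambda>x y. (x,y) \<in> set ps \<or> (y,x) \<in> set ps)"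

lemma deg_xor:
  assumes "finite V"
  shows "Defs.degree V (xr J C) x + 2 * Defs.degree V (\<lambda>x y. J x y \<and> C x y) x
         = Defs.degree V J x + Defs.degree V C x"
proof -
  let ?A = "{y\<in>V. J x y}" and ?B = "{y\<in>V. C x y}"
  have fA: "finite ?A" "finite ?B" using assms by auto
  have e1: "{y\<in>V. xr J C x y} = (?A - ?B) \<union> (?B - ?A)" unfolding xr_def by auto
  have e2: "{y\<in>V. J x y \<and> C x y} = ?A \<inter> ?B" by auto
  have "card ((?A - ?B) \<union> (?B - ?A)) = card (?A - ?B) + card (?B - ?A)"
    by (rule card_Un_disjoint) (use fA in auto)
  moreover have "card ?A = card (?A \<inter> ?B) + card (?A - ?B)" by (rule card_Int_Diff[OF fA(1)])
  moreover have "card ?B = card (?B \<inter> ?A) + card (?B - ?A)" by (rule card_Int_Diff[OF fA(2)])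
  moreover have "?B \<inter> ?A = ?A \<inter> ?B" by auto
  ultimately show ?thesis unfolding Defs.degree_def e1 e2 by simp
qed

lemma sz_xor:
  assumes "finite V"
  shows "szJ V (xr J C) + 2 * szJ V (\<lambda>x y. J x y \<and> C x y) = szJ V J + szJ V C"
  unfolding szJ_def sum_distrib_left sum.distrib[symmetric] using deg_xor[OF assms]
  by (intro sum.cong) auto

lemma tjoin_xr:
  assumes "finite V" "tjoin V E J" "\<forall>x y. C x y \<longrightarrow> E x y" "\<forall>x y. C x y \<longrightarrow> C y x"
    "\<forall>x\<in>V. even (Defs.degree V C x)"
  shows "tjoin V E (xr J C)"
proof -
  have par: "even (Defs.degree V (xr J C) x) = even (Defs.degree V E x)" if "x \<in> V" for x
  proof -
    have eq: "Defs.degree V (xr J C) x + 2 * Defs.degree V (\<lambda>x y. J x y \<and> C x y) x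
         = Defs.degree V J x + Defs.degree V C x" by (rule deg_xor[OF assms(1)])
    have "even (Defs.degree V (xr J C) x + 2 * Defs.degree V (\<lambda>x y. J x y \<and> C x y) x)
       = even (Defs.degree V J x + Defs.degree V C x)" by (simp only: eq)
    then have "even (Defs.degree V (xr J C) x) = even (Defs.degree V J x)"
      using assms(5) that by simp
    then show ?thesis using assms(2) that unfolding tjoin_def by auto
  qed
  have sub: "\<forall>x y. xr J C x y \<longrightarrow> E x y" using assms(2,3) unfolding tjoin_def xr_def by auto
  have sy: "\<forall>x y. xr J C x y \<longrightarrow> xr J C y x" using assms(2,4) unfolding tjoin_def xr_def by blast
  show ?thesis unfolding tjoin_def using sub sy par by blast
qed

lemma nbad_le: "finite V \<Longrightarrow> nbad V E J \<le> card V"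
  unfolding nbad_def by (rule card_mono) auto

lemma meas_lt:
  assumes "finite V" "szJ V J' < szJ V J"
  shows "meas V E J' < meas V E J"
proof -
  have "meas V E J' \<le> szJ V J' * (card V + 1) + card V"
    unfolding meas_def using nbad_le[OF assms(1)] by simp
  also have "\<dots> < (szJ V J' + 1) * (card V + 1)" by simp
  also have "\<dots> \<le> szJ V J * (card V + 1)" using assms(2) by (intro mult_le_mono1) simp
  also have "\<dots> \<le> meas V E J" unfolding meas_def by simp
  finally show ?thesis .
qed


lemma card_degree_le: "finite V \<Longrightarrow> Defs.degree V X x \<le> card V"
  unfolding Defs.degree_def by (rule card_mono) auto

lemma sum3_le:
  fixes f :: "'a \<Rightarrow> nat"
  assumes "finite V" "a \<in> V" "b \<in> V" "c \<in> V" "a \<noteq> b" "a \<noteq> c" "b \<noteq> c"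
  shows "f a + f b + f c \<le> sum f V"
proof -
  have "sum f {a,b,c} \<le> sum f V" by (rule sum_mono2) (use assms in auto)
  then show ?thesis using assms by simp
qed

lemma sum4_le:
  fixes f :: "'a \<Rightarrow> nat"
  assumes "finite V" "a \<in> V" "b \<in> V" "c \<in> V" "d \<in> V" "distinct [a,b,c,d]"
  shows "f a + f b + f c + f d \<le> sum f V"
proof -
  have "sum f {a,b,c,d} \<le> sum f V" by (rule sum_mono2) (use assms in auto)
  then show ?thesis using assms by (simp add: add.assoc)
qed

lemma sum_ind_const:
  assumes "finite V" "S \<subseteq> V"
  shows "(\<Sum>x\<in>V. if x \<in> S then (2::nat) else 0) = 2 * card S"
proof -
  have "(\<Sum>x\<in>V. if x \<in> S then (2::nat) else 0) = sum (\<lambda>_. 2) {x\<in>V. x \<in> S}"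
    by (rule sum.inter_filter[symmetric]) (use assms in auto)
  also have "{x\<in>V. x \<in> S} = S" using assms by auto
  finally show ?thesis by simp
qed

lemma deg_ge_card: "finite V \<Longrightarrow> S \<subseteq> {y\<in>V. X x y} \<Longrightarrow> card S \<le> Defs.degree V X x"
  unfolding Defs.degree_def by (rule card_mono) auto

lemma degT:
  assumes "v \<in> V" "a \<in> V" "b \<in> V" "v \<noteq> a" "v \<noteq> b" "a \<noteq> b"
  shows "Defs.degree V (es [(v,a),(a,b),(b,v)]) x = (if x \<in> {v,a,b} then 2 else 0)"
proof -
  consider "x = v" | "x = a" | "x = b" | "x \<notin> {v,a,b}" by auto
  then show ?thesis
  proof cases
    case 1
    have e: "{y\<in>V. es [(v,a),(a,b),(b,v)] x y} = {a,b}" using assms 1 by (auto simp: es_def)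
    show ?thesis unfolding Defs.degree_def e using assms 1 by (auto simp: eq_commute)
  next
    case 2
    have e: "{y\<in>V. es [(v,a),(a,b),(b,v)] x y} = {v,b}" using assms 2 by (auto simp: es_def)
    show ?thesis unfolding Defs.degree_def e using assms 2 by (auto simp: eq_commute)
  next
    case 3
    have e: "{y\<in>V. es [(v,a),(a,b),(b,v)] x y} = {a,v}" using assms 3 by (auto simp: es_def)
    show ?thesis unfolding Defs.degree_def e using assms 3 by (auto simp: eq_commute)
  next
    case 4
    have e: "{y\<in>V. es [(v,a),(a,b),(b,v)] x y} = {}" using assms 4 by (auto simp: es_def)
    show ?thesis unfolding Defs.degree_def e using assms 4 by (auto simp: eq_commute)
  qed
qed

lemma degQ:
  assumes "v \<in> V" "u \<in> V" "z \<in> V" "w \<in> V" "distinct [v,u,z,w]"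
  shows "Defs.degree V (es [(v,u),(u,z),(z,w),(w,v)]) x = (if x \<in> {v,u,z,w} then 2 else 0)"
proof -
  consider "x = v" | "x = u" | "x = z" | "x = w" | "x \<notin> {v,u,z,w}" by auto
  then show ?thesis
  proof cases
    case 1
    have e: "{y\<in>V. es [(v,u),(u,z),(z,w),(w,v)] x y} = {u,w}" using assms 1 by (auto simp: es_def)
    show ?thesis unfolding Defs.degree_def e using assms 1 by (auto simp: eq_commute)
  next
    case 2
    have e: "{y\<in>V. es [(v,u),(u,z),(z,w),(w,v)] x y} = {v,z}" using assms 2 by (auto simp: es_def)
    show ?thesis unfolding Defs.degree_def e using assms 2 by (auto simp: eq_commute)
  next
    case 3
    have e: "{y\<in>V. es [(v,u),(u,z),(z,w),(w,v)] x y} = {u,w}" using assms 3 by (auto simp: es_def)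
    show ?thesis unfolding Defs.degree_def e using assms 3 by (auto simp: eq_commute)
  next
    case 4
    have e: "{y\<in>V. es [(v,u),(u,z),(z,w),(w,v)] x y} = {z,v}" using assms 4 by (auto simp: es_def)
    show ?thesis unfolding Defs.degree_def e using assms 4 by (auto simp: eq_commute)
  next
    case 5
    have e: "{y\<in>V. es [(v,u),(u,z),(z,w),(w,v)] x y} = {}" using assms 5 by (auto simp: es_def)
    show ?thesis unfolding Defs.degree_def e using assms 5 by (auto simp: eq_commute)
  qed
qed

lemma graphD:
  assumes "graph V E"
  shows "finite V" "E x y \<Longrightarrow> x \<in> V" "E x y \<Longrightarrow> y \<in> V" "E x y \<Longrightarrow> x \<noteq> y" "E x y \<Longrightarrow> E y x"
  using assms unfolding Defs.graph_def by blast+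

lemma S1:
  assumes g: "graph V E" and o: "optJ V E J" and bv: "badv V E J v"
    and va: "E v a" and vb: "E v b" and ab: "E a b"
  shows False
proof -
  note gd = graphD[OF g]
  have fin: "finite V" by (rule gd(1))
  have V: "v \<in> V" "a \<in> V" "b \<in> V" using va vb gd by auto
  have d: "v \<noteq> a" "v \<noteq> b" "a \<noteq> b" using va vb ab gd(4) by auto
  have J: "J v a" "J v b" using bv va vb V unfolding badv_def by auto
  have tj: "tjoin V E J" using o unfolding optJ_def by auto
  then have Js: "J a v" "J b v" using J unfolding tjoin_def by auto
  let ?T = "es [(v,a),(a,b),(b,v)]"
  have CE: "\<forall>x y. ?T x y \<longrightarrow> E x y" using va vb ab gd(5) by (auto simp: es_def)
  have Cs: "\<forall>x y. ?T x y \<longrightarrow> ?T y x" by (auto simp: es_def)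
  have Cp: "\<forall>x\<in>V. even (Defs.degree V ?T x)" using degT[OF V d] by simp
  have tj2: "tjoin V E (xr J ?T)" by (rule tjoin_xr[OF fin tj CE Cs Cp])
  have szT: "szJ V ?T = 6"
    unfolding szJ_def degT[OF V d] using sum_ind_const[OF fin, of "{v,a,b}"] V d by simp
  let ?an = "\<lambda>x y. J x y \<and> ?T x y"
  have a1: "2 \<le> Defs.degree V ?an v"
    using deg_ge_card[OF fin, of "{a,b}" ?an v] V d J by (auto simp: es_def)
  have a2: "1 \<le> Defs.degree V ?an a"
    using deg_ge_card[OF fin, of "{v}" ?an a] V d Js by (auto simp: es_def)
  have a3: "1 \<le> Defs.degree V ?an b"
    using deg_ge_card[OF fin, of "{v}" ?an b] V d Js by (auto simp: es_def)
  have "Defs.degree V ?an v + Defs.degree V ?an a + Defs.degree V ?an b \<le> szJ V ?an"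
    unfolding szJ_def by (rule sum3_le[OF fin V d])
  then have "4 \<le> szJ V ?an" using a1 a2 a3 by simp
  moreover have "szJ V (xr J ?T) + 2 * szJ V ?an = szJ V J + szJ V ?T" by (rule sz_xor[OF fin])
  ultimately have "szJ V (xr J ?T) < szJ V J" using szT by simp
  then have "meas V E (xr J ?T) < meas V E J" by (rule meas_lt[OF fin])
  moreover have "meas V E J \<le> meas V E (xr J ?T)" using o tj2 unfolding optJ_def by auto
  ultimately show False by simp
qed


lemma S2:
  assumes g: "graph V E" and o: "optJ V E J" and bv: "badv V E J v"
    and vu: "E v u" and vw: "E v w" and uz: "E u z" and wz: "E w z" and uw: "u \<noteq> w" and zv: "z \<noteq> v"
  shows "\<not> J u z \<and> \<not> J w z \<and> (\<forall>y\<in>V. E z y \<longrightarrow> y \<noteq> u \<longrightarrow> y \<noteq> w \<longrightarrow> J z y)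
         \<and> optJ V E (xr J (es [(v,u),(u,z),(z,w),(w,v)])) \<and> badv V E (xr J (es [(v,u),(u,z),(z,w),(w,v)])) z"
proof -
  define C where "C = es [(v,u),(u,z),(z,w),(w,v)]"
  note gd = graphD[OF g]
  have fin: "finite V" by (rule gd(1))
  have V: "v \<in> V" "u \<in> V" "z \<in> V" "w \<in> V" using vu vw uz gd by auto
  have d: "distinct [v,u,z,w]" using vu vw uz wz uw zv gd(4) by auto
  have J: "J v u" "J v w" using bv vu vw V unfolding badv_def by auto
  have tj: "tjoin V E J" using o unfolding optJ_def by auto
  have Jsym: "\<And>x y. J x y \<Longrightarrow> J y x" using tj unfolding tjoin_def by auto
  have Js: "J u v" "J w v" using J Jsym by auto
  have CE: "\<forall>x y. C x y \<longrightarrow> E x y" using vu vw uz wz gd(5) by (auto simp: es_def C_def)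
  have Cs: "\<forall>x y. C x y \<longrightarrow> C y x" by (auto simp: es_def C_def)
  have Cp: "\<forall>x\<in>V. even (Defs.degree V C x)" using degQ[OF V d] unfolding C_def by simp
  have tj2: "tjoin V E (xr J C)" by (rule tjoin_xr[OF fin tj CE Cs Cp])
  have szC: "szJ V C = 8"
    unfolding szJ_def C_def degQ[OF V d] using sum_ind_const[OF fin, of "{v,u,z,w}"] V d by simp
  define an where "an = (\<lambda>x y. J x y \<and> C x y)"
  have a1: "2 \<le> Defs.degree V an v"
    using deg_ge_card[OF fin, of "{u,w}" an v] V d J by (auto simp: es_def C_def an_def)
  have a2: "1 \<le> Defs.degree V an u"
    using deg_ge_card[OF fin, of "{v}" an u] V d Js by (auto simp: es_def C_def an_def)
  have a4: "1 \<le> Defs.degree V an w"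
    using deg_ge_card[OF fin, of "{v}" an w] V d Js by (auto simp: es_def C_def an_def)
  have s4: "Defs.degree V an v + Defs.degree V an u + Defs.degree V an z + Defs.degree V an w \<le> szJ V an"
    unfolding szJ_def by (rule sum4_le[OF fin V d])
  have eqs: "szJ V (xr J C) + 2 * szJ V an = szJ V J + 8"
    using sz_xor[OF fin, of J C] szC unfolding an_def by simp
  have nomeas: "meas V E J \<le> meas V E (xr J C)" using o tj2 unfolding optJ_def by auto
  have nuz: "\<not> J u z"
  proof
    assume Juz: "J u z"
    have "2 \<le> Defs.degree V an u"
      using deg_ge_card[OF fin, of "{v,z}" an u] V d Js Juz by (auto simp: es_def C_def an_def)
    moreover have "1 \<le> Defs.degree V an z"
      using deg_ge_card[OF fin, of "{u}" an z] V d Juz Jsym by (auto simp: es_def C_def an_def)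
    ultimately have "szJ V (xr J C) < szJ V J" using s4 a1 a4 eqs by linarith
    then show False using meas_lt[OF fin] nomeas by (meson not_le)
  qed
  have nwz: "\<not> J w z"
  proof
    assume Jwz: "J w z"
    have "2 \<le> Defs.degree V an w"
      using deg_ge_card[OF fin, of "{v,z}" an w] V d Js Jwz by (auto simp: es_def C_def an_def)
    moreover have "1 \<le> Defs.degree V an z"
      using deg_ge_card[OF fin, of "{w}" an z] V d Jwz Jsym by (auto simp: es_def C_def an_def)
    ultimately have "szJ V (xr J C) < szJ V J" using s4 a1 a2 eqs by linarith
    then show False using meas_lt[OF fin] nomeas by (meson not_le)
  qed
  have szle: "szJ V (xr J C) \<le> szJ V J" using s4 a1 a2 a4 eqs by linarith
  have badchar: "x \<noteq> v \<and> x \<noteq> u \<and> x \<noteq> w \<and> (x \<noteq> z \<longrightarrow> badv V E J x)"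
    if x: "badv V E (xr J C) x" for x
  proof -
    have xv: "x \<noteq> v"
    proof
      assume "x = v" then have "xr J C v u" using x vu V unfolding badv_def by auto
      then show False using J by (auto simp: xr_def C_def es_def)
    qed
    have xu: "x \<noteq> u"
    proof
      assume "x = u" then have "xr J C u v" using x vu gd(5) V unfolding badv_def by auto
      then show False using Js by (auto simp: xr_def C_def es_def)
    qed
    have xw: "x \<noteq> w"
    proof
      assume "x = w" then have "xr J C w v" using x vw gd(5) V unfolding badv_def by auto
      then show False using Js by (auto simp: xr_def C_def es_def)
    qed
    have "badv V E J x" if "x \<noteq> z"
    proof -
      have "\<And>y. \<not> C x y" using xv xu xw that by (auto simp: C_def es_def)
      then show ?thesis using x unfolding badv_def xr_def by auto
    qed
    then show ?thesis using xv xu xw by auto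
  qed
  have vbad: "v \<in> {x\<in>V. badv V E J x}" using bv V by auto
  have finB: "finite {x\<in>V. badv V E J x}" using fin by auto
  have others: "\<forall>y\<in>V. E z y \<longrightarrow> y \<noteq> u \<longrightarrow> y \<noteq> w \<longrightarrow> J z y"
  proof (rule ccontr)
    assume "\<not> (\<forall>y\<in>V. E z y \<longrightarrow> y \<noteq> u \<longrightarrow> y \<noteq> w \<longrightarrow> J z y)"
    then obtain y where y: "y \<in> V" "E z y" "y \<noteq> u" "y \<noteq> w" "\<not> J z y" by auto
    have nzb: "\<not> badv V E (xr J C) z"
    proof
      assume "badv V E (xr J C) z"
      then have "xr J C z y" using y unfolding badv_def by auto
      moreover have "\<not> C z y" using y d by (auto simp: C_def es_def)
      ultimately show False using y by (auto simp: xr_def)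
    qed
    have "{x\<in>V. badv V E (xr J C) x} \<subseteq> {x\<in>V. badv V E J x} - {v}"
      using badchar nzb by blast
    then have "card {x\<in>V. badv V E (xr J C) x} < card {x\<in>V. badv V E J x}"
      using vbad finB by (meson card_Diff1_less_iff order_le_less_trans card_mono finite_Diff)
    then have "nbad V E (xr J C) < nbad V E J" unfolding nbad_def .
    then have "meas V E (xr J C) < meas V E J" using szle unfolding meas_def
      by (meson add_le_less_mono mult_le_mono1)
    then show False using nomeas by simp
  qed
  have zb: "badv V E (xr J C) z"
    unfolding badv_def
  proof (intro conjI ballI impI)
    show "z \<in> V" using V by simp
    fix y assume y: "y \<in> V" "E z y"
    show "xr J C z y"
    proof (cases "y = u \<or> y = w")
      case True
      then show ?thesis using nuz nwz Jsym by (auto simp: xr_def C_def es_def)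
    next
      case False
      then have "\<not> C z y" using d by (auto simp: C_def es_def)
      then show ?thesis using others y False by (auto simp: xr_def)
    qed
  qed
  have "{x\<in>V. badv V E (xr J C) x} \<subseteq> ({x\<in>V. badv V E J x} - {v}) \<union> {z}"
    using badchar by blast
  then have "card {x\<in>V. badv V E (xr J C) x} \<le> card (({x\<in>V. badv V E J x} - {v}) \<union> {z})"
    using finB by (intro card_mono) auto
  also have "\<dots> \<le> card ({x\<in>V. badv V E J x} - {v}) + card {z}"
    by (rule card_Un_le)
  also have "\<dots> = card {x\<in>V. badv V E J x}"
    using card_Suc_Diff1[OF finB vbad] by simp
  finally have "nbad V E (xr J C) \<le> nbad V E J" unfolding nbad_def .
  then have "meas V E (xr J C) \<le> meas V E J" using szle unfolding meas_def
    by (meson add_le_mono mult_le_mono1)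
  then have "optJ V E (xr J C)" using o tj2 unfolding optJ_def by (meson order_trans)
  then show ?thesis using nuz nwz others zb unfolding C_def by blast
qed

lemma lin_aux:
  fixes S Q K P D R k n :: int
  assumes "S \<le> Q - K + 2*k + 2*n - 1" "Q \<le> P" "- K + 2*k + D \<le> n - 2" "R = P + 3*(n-1) - D"
  shows "S \<le> R"
proof -
  have a: "S \<le> P - K + 2*k + 2*n - 1" using assms(1,2) by linarith
  have b: "- K + 2*k \<le> n - 2 - D" using assms(3) by linarith
  have c: "R = P + 3*n - 3 - D" using assms(4) by simp
  from a b c show ?thesis by linarith
qed

lemma arithB:
  fixes a W k d n S :: int
  assumes n: "n = 1 + a + W" and "d \<le> a" "d \<le> k + 2" "0 \<le> k" "k + 1 \<le> W" "2 \<le> d" "7*d - 7 \<le> n"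
    and S: "S \<le> 2*a + 4*W + k + k*(W - k) + (W - k - 1)*(W - 1)"
  shows "S \<le> (n-1)*(n-2*d+2)"
proof -
  have e1: "2*a + 4*W + k + k*(W - k) + (W - k - 1)*(W - 1) = W*W - (k*k) + 2*k + 2*n - 1"
    using n by (simp add: algebra_simps)
  have W0: "0 \<le> W" using assms by linarith
  have Wle: "W \<le> n - 1 - d" using assms by linarith
  have e2: "W*W \<le> (n-1-d)*(n-1-d)" using W0 Wle by (simp add: mult_mono)
  have e3: "- (k*k) + 2*k + d*d \<le> n - 2"
  proof (cases "d = 2")
    case True
    have "0 \<le> (k-1)*(k-1)" by simp
    moreover have "(k-1)*(k-1) = k*k - 2*k + 1" by (simp add: algebra_simps)
    moreover have "d*d = 4" using True by simp
    ultimately show ?thesis using True assms by linarith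
  next
    case False
    then have d3: "3 \<le> d" using assms by simp
    have "0 \<le> (k - (d-2)) * (k + d - 4)" using assms d3 by (intro mult_nonneg_nonneg) auto
    moreover have "(k - (d-2)) * (k + d - 4) = k*k + 2*k*d - 6*k - d*d + 6*d - 8 - k*d - k*d + 2*k + 2*k"
      by (simp add: algebra_simps)
    ultimately show ?thesis using assms d3 by (simp add: algebra_simps)
  qed
  have e4: "(n-1)*(n-2*d+2) = (n-1-d)*(n-1-d) + 3*(n-1) - d*d" by (simp add: algebra_simps)
  have s1: "S \<le> W*W - (k*k) + 2*k + 2*n - 1" using S e1 by linarith
  show ?thesis by (rule lin_aux[OF s1 e2 e3 e4])
qed

lemma arithA:
  fixes a W d n S X :: int
  assumes n: "n = 1 + a + W" and ad: "d \<le> a" and d2: "2 \<le> d" and "a*(d-1) \<le> X" "X \<le> W"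
    and S: "S \<le> 2*a + 2*X + W*(W-1)"
  shows "S \<le> (n-1)*(n-2*d+2)"
proof -
  have h1: "(n-1)*(n-2*d+2) - (2*a + 2*W + W*(W-1)) = 2*(n-1)*(a-d+1) - a*a - a"
    using n by (simp add: algebra_simps)
  have h2: "a*d \<le> n - 1" using assms by (simp add: algebra_simps)
  have h3: "2*(a*d)*(a-d+1) \<le> 2*(n-1)*(a-d+1)" using h2 ad by (intro mult_right_mono) auto
  have h4: "2*(a*d)*(a-d+1) - a*a - a = a*((2*d-1)*(a-d) + d - 1)" by (simp add: algebra_simps)
  have "0 \<le> (2*d-1)*(a-d)" using ad d2 by (intro mult_nonneg_nonneg) auto
  then have q: "0 \<le> (2*d-1)*(a-d) + d - 1" using d2 by linarith
  have h5: "0 \<le> a*((2*d-1)*(a-d) + d - 1)" using ad d2 q by (intro mult_nonneg_nonneg) auto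
  show ?thesis using S h1 h3 h4 h5 assms by linarith
qed

lemma int_le_msub:
  fixes Y a b c :: nat
  assumes "Y \<le> a * (b - c)" "c \<le> b"
  shows "int Y \<le> int a * (int b - int c)"
proof -
  have "int Y \<le> int (a * (b - c))" using assms(1) by (simp only: of_nat_le_iff)
  also have "int (a * (b - c)) = int a * int (b - c)" by (simp only: of_nat_mult)
  also have "int (b - c) = int b - int c" using assms(2) by (rule of_nat_diff)
  finally show ?thesis .
qed

lemma two_elems: assumes "2 \<le> card X" shows "\<exists>a b. a \<in> X \<and> b \<in> X \<and> a \<noteq> b"
proof -
  from assms have "Suc 1 \<le> card X" by simp
  then obtain a B where "X = insert a B" "a \<notin> B" "1 \<le> card B" "finite B"
    unfolding card_le_Suc_iff by blast
  then have "B \<noteq> {}" by auto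
  then obtain b where "b \<in> B" by blast
  then show ?thesis using \<open>X = insert a B\<close> \<open>a \<notin> B\<close> by blast
qed

lemma three_elems: assumes "3 \<le> card X"
  shows "\<exists>a b c. a \<in> X \<and> b \<in> X \<and> c \<in> X \<and> a \<noteq> b \<and> a \<noteq> c \<and> b \<noteq> c"
proof -
  from assms have "Suc 2 \<le> card X" by simp
  then obtain a B where B: "X = insert a B" "a \<notin> B" "2 \<le> card B" "finite B"
    unfolding card_le_Suc_iff by blast
  then obtain b c where "b \<in> B" "c \<in> B" "b \<noteq> c" using two_elems by blast
  then show ?thesis using B by blast
qed

lemma card_filter_sum: "finite B \<Longrightarrow> card {y\<in>B. P y} = (\<Sum>y\<in>B. if P y then 1 else 0)"
  by (simp add: sum.inter_filter[symmetric])

lemma dcount: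
  assumes "finite A" "finite B" "\<And>x y. R x y = R y x"
  shows "(\<Sum>x\<in>A. card {y\<in>B. R x y}) = (\<Sum>y\<in>B. card {x\<in>A. R y x})"
proof -
  have "(\<Sum>x\<in>A. card {y\<in>B. R x y}) = (\<Sum>x\<in>A. \<Sum>y\<in>B. if R x y then 1 else 0)"
    using assms by (simp add: card_filter_sum)
  also have "\<dots> = (\<Sum>y\<in>B. \<Sum>x\<in>A. if R x y then 1 else 0)" by (rule sum.swap)
  also have "\<dots> = (\<Sum>y\<in>B. card {x\<in>A. R y x})" using assms by (simp add: card_filter_sum)
  finally show ?thesis .
qed

lemma no_bad:
  assumes g: "graph V E" and o: "optJ V E J" and bv: "badv V E J v"
    and dmin: "\<forall>x\<in>V. \<delta> \<le> Defs.degree V E x" and d2: "2 \<le> \<delta>"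
    and n7: "7 * int \<delta> - 7 \<le> int (card V)"
    and S: "(int (card V) - 1) * (int (card V) - 2 * int \<delta> + 2) < int (\<Sum>x\<in>V. Defs.degree V E x)"
  shows False
proof -
  note gd = graphD[OF g]
  have fin: "finite V" by (rule gd(1))
  have vV: "v \<in> V" using bv unfolding badv_def by auto
  have tj: "tjoin V E J" using o unfolding optJ_def by auto
  have Jsym: "\<And>x y. J x y \<Longrightarrow> J y x" using tj unfolding tjoin_def by auto
  have Esym: "\<And>x y. E x y = E y x" using gd(5) by blast
  define A where "A = {u\<in>V. E v u}"
  define W where "W = V - A - {v}"
  define c where "c y = card {u\<in>A. E y u}" for y
  define e where "e y = card {y'\<in>W. E y y'}" for y
  have finA: "finite A" "finite W" using fin by (auto simp: A_def W_def)
  have AV: "A \<subseteq> V" "W \<subseteq> V" by (auto simp: A_def W_def)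
  have vA: "v \<notin> A" using gd(4) by (auto simp: A_def)
  have vW: "v \<notin> W" by (auto simp: W_def)
  have AW: "A \<inter> W = {}" by (auto simp: W_def)
  have Vsplit: "V = insert v (A \<union> W)" using vV by (auto simp: W_def A_def)
  have cardA: "card A = Defs.degree V E v" by (simp add: A_def Defs.degree_def)
  have indep: "\<And>p q. p \<in> A \<Longrightarrow> q \<in> A \<Longrightarrow> \<not> E p q" using S1[OF g o bv] by (auto simp: A_def)
  have Wnv: "\<And>y. y \<in> W \<Longrightarrow> \<not> E y v" using gd(5) by (auto simp: W_def A_def)
  have c2: "c y \<le> 2" if y: "y \<in> W" for y
  proof (rule ccontr)
    assume "\<not> c y \<le> 2"
    then have "3 \<le> card {u\<in>A. E y u}" by (simp add: c_def)
    then obtain u1 u2 u3 where u: "u1 \<in> {u\<in>A. E y u}" "u2 \<in> {u\<in>A. E y u}" "u3 \<in> {u\<in>A. E y u}"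
      "u1 \<noteq> u2" "u1 \<noteq> u3" "u2 \<noteq> u3" using three_elems by blast
    have yv: "y \<noteq> v" using y vW by auto
    have vu: "E v u1" "E v u2" "E v u3" using u by (auto simp: A_def)
    have uy: "E u1 y" "E u2 y" "E u3 y" using u Esym by auto
    have "J y u3" using S2[OF g o bv vu(1) vu(2) uy(1) uy(2) u(4) yv] u(3,5,6) AV by auto
    moreover have "\<not> J u3 y" using S2[OF g o bv vu(1) vu(3) uy(1) uy(3) u(5) yv] by auto
    ultimately show False using Jsym by blast
  qed
  have degsplit: "Defs.degree V E x = card {y\<in>A. E x y} + card {y\<in>W. E x y} + (if E x v then 1 else 0)" for x
  proof -
    have eq: "{y\<in>V. E x y} = ({y\<in>A. E x y} \<union> {y\<in>W. E x y}) \<union> {y\<in>{v}. E x y}"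
      using Vsplit by auto
    have "card {y\<in>V. E x y} = card ({y\<in>A. E x y} \<union> {y\<in>W. E x y}) + card {y\<in>{v}. E x y}"
      unfolding eq by (rule card_Un_disjoint) (use finA vA vW in auto)
    also have "card ({y\<in>A. E x y} \<union> {y\<in>W. E x y}) = card {y\<in>A. E x y} + card {y\<in>W. E x y}"
      by (rule card_Un_disjoint) (use finA AW in auto)
    also have "{y\<in>{v}. E x y} = (if E x v then {v} else {})" by auto
    then have "card {y\<in>{v}. E x y} = (if E x v then 1 else 0)" by simp
    finally show ?thesis by (simp add: Defs.degree_def)
  qed
  define X where "X = (\<Sum>y\<in>W. c y)"
  define Y where "Y = (\<Sum>y\<in>W. e y)"
  have sumsplit: "(\<Sum>x\<in>V. Defs.degree V E x) = Defs.degree V E v + (\<Sum>x\<in>A. Defs.degree V E x) + (\<Sum>x\<in>W. Defs.degree V E x)"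
  proof -
    define f where "f = (\<lambda>x. Defs.degree V E x)"
    have "sum f V = sum f (insert v (A \<union> W))" using Vsplit by (rule arg_cong)
    also have "\<dots> = f v + sum f (A \<union> W)" using finA vA vW by (simp add: sum.insert)
    finally have "(\<Sum>x\<in>V. Defs.degree V E x) = Defs.degree V E v + (\<Sum>x\<in>A \<union> W. Defs.degree V E x)"
      unfolding f_def .
    also have "(\<Sum>x\<in>A \<union> W. Defs.degree V E x) = (\<Sum>x\<in>A. Defs.degree V E x) + (\<Sum>x\<in>W. Defs.degree V E x)"
      by (rule sum.union_disjoint) (use finA AW in auto)
    finally show ?thesis by simp
  qed
  have degA: "Defs.degree V E x = card {y\<in>W. E x y} + 1" if "x \<in> A" for x
  proof -
    have "{y\<in>A. E x y} = {}" using indep that by auto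
    then have "card {y\<in>A. E x y} = 0" by (simp only: card.empty)
    moreover have "E x v" using that Esym by (auto simp: A_def)
    ultimately show ?thesis using degsplit[of x] by simp
  qed
  have degW: "Defs.degree V E x = c x + e x" if "x \<in> W" for x
    using degsplit[of x] Wnv[OF that] by (simp add: c_def e_def)
  have Xsw: "(\<Sum>x\<in>A. card {y\<in>W. E x y}) = X"
    unfolding X_def c_def by (rule dcount[OF finA Esym])
  have Stot: "(\<Sum>x\<in>V. Defs.degree V E x) = 2 * card A + 2 * X + Y"
  proof -
    have "(\<Sum>x\<in>A. Defs.degree V E x) = (\<Sum>x\<in>A. card {y\<in>W. E x y} + 1)" using degA by simp
    also have "\<dots> = X + card A" using Xsw by (simp add: sum_Suc)
    finally have sA: "(\<Sum>x\<in>A. Defs.degree V E x) = X + card A" .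
    have sW: "(\<Sum>x\<in>W. Defs.degree V E x) = X + Y" using degW by (simp add: sum.distrib X_def Y_def)
    show ?thesis using sumsplit sA sW cardA by simp
  qed
  have ncard: "card V = 1 + card A + card W"
  proof -
    have "card V = card (insert v (A \<union> W))" using Vsplit by simp
    also have "\<dots> = 1 + card (A \<union> W)" using finA vA vW by simp
    also have "card (A \<union> W) = card A + card W" using finA AW by (simp add: card_Un_disjoint)
    finally show ?thesis by simp
  qed
  have ad: "\<delta> \<le> card A" using dmin vV cardA by simp
  have eW: "e y \<le> card W - 1" if "y \<in> W" for y
  proof -
    have "{y'\<in>W. E y y'} \<subseteq> W - {y}" using gd(4) by auto
    then have "e y \<le> card (W - {y})" unfolding e_def by (intro card_mono) (use finA in auto)
    then show ?thesis using that finA by simp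
  qed
  show False
  proof (cases "\<exists>z\<in>W. 2 \<le> c z")
    case False
    then have c1: "\<And>y. y \<in> W \<Longrightarrow> c y \<le> 1" by fastforce
    have XW: "X \<le> card W" unfolding X_def using sum_bounded_above[of W c 1] c1 by simp
    have XA: "card A * (\<delta> - 1) \<le> X"
    proof -
      have "\<And>x. x \<in> A \<Longrightarrow> \<delta> - 1 \<le> card {y\<in>W. E x y}" using degA dmin AV by fastforce
      then have "card A * (\<delta> - 1) \<le> (\<Sum>x\<in>A. card {y\<in>W. E x y})"
        using sum_bounded_below[of A "\<delta> - 1" "\<lambda>x. card {y\<in>W. E x y}"] by simp
      then show ?thesis using Xsw by simp
    qed
    have YW: "Y \<le> card W * (card W - 1)" unfolding Y_def using sum_bounded_above[of W e "card W - 1"] eW by simp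
    have i1: "int (card A) * (int \<delta> - 1) \<le> int X"
    proof -
      have "int (card A * (\<delta> - 1)) \<le> int X" using XA by (simp only: of_nat_le_iff)
      moreover have eqd: "int (\<delta> - 1) = int \<delta> - 1" using d2 by simp
      then have "int (card A * (\<delta> - 1)) = int (card A) * (int \<delta> - 1)" by (simp only: of_nat_mult)
      ultimately show ?thesis by linarith
    qed
    have i2: "int Y \<le> int (card W) * (int (card W) - 1)"
    proof (cases "card W = 0")
      case True then show ?thesis using YW by simp
    next
      case False then show ?thesis using int_le_msub[OF YW] by simp
    qed
    have "int (\<Sum>x\<in>V. Defs.degree V E x) \<le> (int (card V) - 1) * (int (card V) - 2 * int \<delta> + 2)"
    proof (rule arithA[of "int (card V)" "int (card A)" "int (card W)" "int \<delta>" "int X"])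
      show "int (card V) = 1 + int (card A) + int (card W)" using ncard by simp
      show "int \<delta> \<le> int (card A)" using ad by simp
      show "2 \<le> int \<delta>" using d2 by simp
      show "int (card A) * (int \<delta> - 1) \<le> int X" by (rule i1)
      show "int X \<le> int (card W)" using XW by simp
      have st: "int (\<Sum>x\<in>V. Defs.degree V E x) = 2 * int (card A) + 2 * int X + int Y"
        by (simp only: Stot of_nat_add of_nat_mult of_nat_numeral)
      show "int (\<Sum>x\<in>V. Defs.degree V E x) \<le> 2 * int (card A) + 2 * int X + int (card W) * (int (card W) - 1)"
        using st i2 by linarith
    qed
    then show False using S by linarith
  next
    case True
    then obtain z where zW: "z \<in> W" and cz: "2 \<le> c z" by blast
    obtain u w where uw: "u \<in> {u\<in>A. E z u}" "w \<in> {u\<in>A. E z u}" "u \<noteq> w"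
      using two_elems cz unfolding c_def by blast
    have zv: "z \<noteq> v" using zW vW by auto
    have vu: "E v u" "E v w" using uw by (auto simp: A_def)
    have uz: "E u z" "E w z" using uw Esym by auto
    note s2 = S2[OF g o bv vu(1) vu(2) uz(1) uz(2) uw(3) zv]
    have indZ: "\<And>p q. E z p \<Longrightarrow> E z q \<Longrightarrow> \<not> E p q"
      using S1[of V E _ z] g s2 by blast
    define Z where "Z = {y\<in>W. E z y}"
    have finZ: "finite Z" using finA by (simp add: Z_def)
    have ZW: "Z \<subseteq> W" by (auto simp: Z_def)
    have zZ: "z \<notin> Z" using gd(4) by (auto simp: Z_def)
    have Az: "{u\<in>A. E z u} = {u,w}"
    proof -
      have sub: "{u,w} \<subseteq> {u\<in>A. E z u}" using uw by auto
      have "card {u\<in>A. E z u} \<le> 2" using c2[OF zW] by (simp add: c_def)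
      moreover have "card {u,w} = 2" using uw by simp
      ultimately show ?thesis using sub finA by (metis (no_types, lifting) card_seteq finite_subset mem_Collect_eq subsetI)
    qed
    have Nz: "{y\<in>V. E z y} = {u,w} \<union> Z"
    proof
      show "{y\<in>V. E z y} \<subseteq> {u,w} \<union> Z"
      proof
        fix y assume y: "y \<in> {y\<in>V. E z y}"
        then have "y \<noteq> v" using Wnv zW by auto
        then have "y \<in> A \<or> y \<in> W" using y Vsplit by auto
        then show "y \<in> {u,w} \<union> Z" using y Az by (auto simp: Z_def)
      qed
      show "{u,w} \<union> Z \<subseteq> {y\<in>V. E z y}" using uw AV uz Esym by (auto simp: Z_def)
    qed
    have uwZ: "{u,w} \<inter> Z = {}" using uw AW by (auto simp: Z_def)
    have degz: "Defs.degree V E z = 2 + card Z"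
      unfolding Defs.degree_def Nz using uwZ finZ uw by (simp add: card_Un_disjoint)
    have "z \<in> V" using zW AV by auto
    then have "\<delta> \<le> Defs.degree V E z" using dmin by auto
    then have kd: "\<delta> \<le> 2 + card Z" using degz by simp
    have ez: "e z = card Z" by (simp add: e_def Z_def)
    have eZ: "e y \<le> card W - card Z" if "y \<in> Z" for y
    proof -
      have "{y'\<in>W. E y y'} \<subseteq> W - Z" using indZ that by (auto simp: Z_def)
      then have "e y \<le> card (W - Z)" unfolding e_def by (intro card_mono) (use finA in auto)
      then show ?thesis using finZ ZW by (simp add: card_Diff_subset)
    qed
    define R where "R = W - Z - {z}"
    have Wsp: "W = insert z (Z \<union> R)" using zW ZW by (auto simp: R_def)
    have cardR: "card R = card W - card Z - 1"
      using finA finZ ZW zW zZ by (simp add: R_def card_Diff_subset card_Diff_singleton)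
    have cardW: "card Z + 1 \<le> card W"
    proof -
      have "insert z Z \<subseteq> W" using zW ZW by auto
      then have "card (insert z Z) \<le> card W" using finA by (intro card_mono) auto
      then show ?thesis using zZ finZ by simp
    qed
    have Ysp: "Y = e z + (\<Sum>y\<in>Z. e y) + (\<Sum>y\<in>R. e y)"
    proof -
      have fR: "finite R" using finA by (simp add: R_def)
      have "Y = e z + (\<Sum>y\<in>Z \<union> R. e y)" unfolding Y_def
        by (subst Wsp) (use finZ fR zZ in \<open>auto simp: R_def\<close>)
      also have "(\<Sum>y\<in>Z \<union> R. e y) = (\<Sum>y\<in>Z. e y) + (\<Sum>y\<in>R. e y)"
        by (rule sum.union_disjoint) (use finZ fR in \<open>auto simp: R_def\<close>)
      finally show ?thesis by simp
    qed
    have YZ: "(\<Sum>y\<in>Z. e y) \<le> card Z * (card W - card Z)"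
      using sum_bounded_above[of Z e "card W - card Z"] eZ by simp
    have YR: "(\<Sum>y\<in>R. e y) \<le> card R * (card W - 1)"
      using sum_bounded_above[of R e "card W - 1"] eW by (simp add: R_def)
    have X2: "X \<le> 2 * card W" unfolding X_def using sum_bounded_above[of W c 2] c2 by simp
    have iY: "int Y \<le> int (card Z) + int (card Z) * (int (card W) - int (card Z))
              + (int (card W) - int (card Z) - 1) * (int (card W) - 1)"
    proof -
      have "int Y = int (e z) + int (\<Sum>y\<in>Z. e y) + int (\<Sum>y\<in>R. e y)" using Ysp by simp
      moreover have "int (\<Sum>y\<in>Z. e y) \<le> int (card Z) * (int (card W) - int (card Z))"
        using int_le_msub[OF YZ] cardW by simp
      moreover have "int (\<Sum>y\<in>R. e y) \<le> int (card R) * (int (card W) - 1)"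
        using int_le_msub[OF YR] cardW by simp
      moreover have "int (card R) * (int (card W) - 1) = (int (card W) - int (card Z) - 1) * (int (card W) - 1)"
        using cardR cardW by simp
      ultimately show ?thesis using ez by linarith
    qed
    have "int (\<Sum>x\<in>V. Defs.degree V E x) \<le> (int (card V) - 1) * (int (card V) - 2 * int \<delta> + 2)"
    proof (rule arithB[of "int (card V)" "int (card A)" "int (card W)" "int \<delta>" "int (card Z)"])
      show "int (card V) = 1 + int (card A) + int (card W)" using ncard by simp
      show "int \<delta> \<le> int (card A)" using ad by simp
      show "int \<delta> \<le> int (card Z) + 2" using kd by simp
      show "0 \<le> int (card Z)" by simp
      show "int (card Z) + 1 \<le> int (card W)" using cardW by simp
      show "2 \<le> int \<delta>" using d2 by simp
      show "7 * int \<delta> - 7 \<le> int (card V)" using n7 .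
      show "int (\<Sum>x\<in>V. Defs.degree V E x) \<le> 2 * int (card A) + 4 * int (card W) + int (card Z) +
          int (card Z) * (int (card W) - int (card Z)) + (int (card W) - int (card Z) - 1) * (int (card W) - 1)"
      proof -
        have st: "int (\<Sum>x\<in>V. Defs.degree V E x) = 2 * int (card A) + 2 * int X + int Y"
          by (simp only: Stot of_nat_add of_nat_mult of_nat_numeral)
        have x2: "int X \<le> 2 * int (card W)" using X2 by simp
        show ?thesis using st x2 iY by linarith
      qed
    qed
    then show False using S by linarith
  qed
qed


lemma opt_exists:
  assumes "tjoin V E J0"
  shows "\<exists>J. optJ V E J"
proof -
  let ?P = "\<lambda>k. \<exists>J. tjoin V E J \<and> meas V E J = k"
  have ex: "\<exists>k. ?P k" using assms by auto
  have "?P (Least ?P)" by (rule LeastI_ex[OF ex])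
  then obtain J where J: "tjoin V E J" "meas V E J = (Least ?P)" by blast
  have "meas V E J \<le> meas V E J'" if "tjoin V E J'" for J'
  proof -
    have "?P (meas V E J')" using that by auto
    then have "Least ?P \<le> meas V E J'" by (rule Least_le)
    then show ?thesis using J by simp
  qed
  then show ?thesis using J unfolding optJ_def by blast
qed

lemma ef_from_opt:
  assumes g: "graph V E" and tj: "tjoin V E J" and nb: "\<forall>v\<in>V. \<not> badv V E J v"
  shows "has_even_factor V E"
proof -
  note gd = graphD[OF g]
  have fin: "finite V" by (rule gd(1))
  define F where "F = (\<lambda>x y. E x y \<and> \<not> J x y)"
  have JE: "\<And>x y. J x y \<Longrightarrow> E x y" using tj unfolding tjoin_def by auto
  have Js: "\<And>x y. J x y \<Longrightarrow> J y x" using tj unfolding tjoin_def by auto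
  have FE: "\<forall>u v. F u v \<longrightarrow> E u v" by (auto simp: F_def)
  have Fs: "\<forall>u v. F u v \<longrightarrow> F v u" using gd(5) Js by (auto simp: F_def)
  have "Defs.degree V F v \<noteq> 0 \<and> even (Defs.degree V F v)" if v: "v \<in> V" for v
  proof -
    have eq: "{y\<in>V. F v y} = {y\<in>V. E v y} - {y\<in>V. J v y}" by (auto simp: F_def)
    have sub: "{y\<in>V. J v y} \<subseteq> {y\<in>V. E v y}" using JE by auto
    have dF: "Defs.degree V F v = Defs.degree V E v - Defs.degree V J v"
      unfolding Defs.degree_def eq using sub fin by (simp add: card_Diff_subset)
    have le: "Defs.degree V J v \<le> Defs.degree V E v"
      unfolding Defs.degree_def using sub fin by (simp add: card_mono)
    have par: "even (Defs.degree V J v) = even (Defs.degree V E v)" using tj v unfolding tjoin_def by auto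
    have ev: "even (Defs.degree V F v)" unfolding dF using le par
      by (metis add_diff_inverse_nat even_add not_le)
    obtain y where y: "y \<in> V" "E v y" "\<not> J v y" using nb v unfolding badv_def by auto
    then have "y \<in> {y\<in>V. F v y}" by (auto simp: F_def)
    then have "Defs.degree V F v \<noteq> 0" unfolding Defs.degree_def using fin by auto
    then show ?thesis using ev by simp
  qed
  then show ?thesis unfolding Defs.has_even_factor_def using FE Fs by blast
qed

lemma comb_main:
  assumes g: "graph V E" and dmin: "\<forall>x\<in>V. \<delta> \<le> Defs.degree V E x" and d2: "2 \<le> \<delta>"
    and n7: "7 * int \<delta> - 7 \<le> int (card V)"
    and S: "(int (card V) - 1) * (int (card V) - 2 * int \<delta> + 2) < int (\<Sum>x\<in>V. Defs.degree V E x)"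
  shows "has_even_factor V E"
proof -
  have tjE: "tjoin V E E" using g unfolding tjoin_def Defs.graph_def by blast
  obtain J where o: "optJ V E J" using opt_exists[OF tjE] by blast
  have "\<forall>v\<in>V. \<not> badv V E J v" using no_bad[OF g o _ dmin d2 n7 S] by blast
  then show ?thesis using ef_from_opt[OF g] o unfolding optJ_def by blast
qed




lemma eig_row:
  assumes "finite V" "u \<in> V"
  shows "(\<Sum>w\<in>V. signless_laplacian V E u w * x w)
       = real (Defs.degree V E u) * x u + (\<Sum>w\<in>{w\<in>V. E u w}. x w)"
proof -
  have "(\<Sum>w\<in>V. signless_laplacian V E u w * x w)
      = (\<Sum>w\<in>V. (if E u w then x w else 0)) + (\<Sum>w\<in>V. (if w = u then real (Defs.degree V E u) * x w else 0))"
    unfolding Defs.signless_laplacian_def sum.distrib[symmetric]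
    by (intro sum.cong) (auto simp: algebra_simps)
  also have "(\<Sum>w\<in>V. (if E u w then x w else 0)) = (\<Sum>w\<in>{w\<in>V. E u w}. x w)"
    using assms(1) by (simp add: sum.inter_filter)
  also have "(\<Sum>w\<in>V. (if w = u then real (Defs.degree V E u) * x w else 0)) = real (Defs.degree V E u) * x u"
    using assms by (simp add: sum.delta')
  finally show ?thesis by simp
qed

lemma collatz:
  assumes g: "graph V E" and dpos: "\<forall>v\<in>V. 0 < Defs.degree V E v" and ev: "Q_eigenvalue V E \<mu>"
  shows "\<exists>v\<in>V. \<bar>\<mu>\<bar> * real (Defs.degree V E v)
          \<le> real (Defs.degree V E v) * real (Defs.degree V E v) + (\<Sum>w\<in>{w\<in>V. E v w}. real (Defs.degree V E w))"
proof -
  have fin: "finite V" using g unfolding Defs.graph_def by auto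
  obtain x where x0: "\<exists>v\<in>V. x v \<noteq> 0" and xe: "\<forall>u\<in>V. (\<Sum>w\<in>V. signless_laplacian V E u w * x w) = \<mu> * x u"
    using ev unfolding Defs.Q_eigenvalue_def by blast
  define d where "d v = real (Defs.degree V E v)" for v
  have dp: "\<And>v. v \<in> V \<Longrightarrow> 0 < d v" using dpos by (simp add: d_def)
  define f where "f v = \<bar>x v\<bar> / d v" for v
  have Vne: "V \<noteq> {}" using x0 by auto
  define M where "M = Max (f ` V)"
  have Mge: "\<And>u. u \<in> V \<Longrightarrow> f u \<le> M" unfolding M_def using fin by auto
  have "M \<in> f ` V" unfolding M_def using fin Vne by (intro Max_in) auto
  then obtain v where vV: "v \<in> V" and fv: "f v = M" by auto
  obtain w0 where w0: "w0 \<in> V" "x w0 \<noteq> 0" using x0 by auto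
  have "0 < f w0" unfolding f_def using w0 dp by simp
  then have Mp: "0 < M" using Mge[OF w0(1)] by simp
  have xu: "\<bar>x u\<bar> \<le> M * d u" if "u \<in> V" for u
    using Mge[OF that] dp[OF that] unfolding f_def by (simp add: divide_le_eq)
  have xv: "\<bar>x v\<bar> = M * d v" using fv dp[OF vV] unfolding f_def by (simp add: divide_eq_eq)
  have row: "\<mu> * x v = d v * x v + (\<Sum>w\<in>{w\<in>V. E v w}. x w)"
    using xe vV eig_row[OF fin vV, of E x] by (simp add: d_def)
  have "\<bar>\<mu>\<bar> * \<bar>x v\<bar> = \<bar>d v * x v + (\<Sum>w\<in>{w\<in>V. E v w}. x w)\<bar>" using row by (simp add: abs_mult[symmetric])
  also have "\<dots> \<le> \<bar>d v * x v\<bar> + \<bar>\<Sum>w\<in>{w\<in>V. E v w}. x w\<bar>" by (rule abs_triangle_ineq)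
  also have "\<bar>d v * x v\<bar> = d v * \<bar>x v\<bar>" using dp[OF vV] by (simp add: abs_mult)
  also have "\<bar>\<Sum>w\<in>{w\<in>V. E v w}. x w\<bar> \<le> (\<Sum>w\<in>{w\<in>V. E v w}. \<bar>x w\<bar>)" by (rule sum_abs)
  also have "(\<Sum>w\<in>{w\<in>V. E v w}. \<bar>x w\<bar>) \<le> (\<Sum>w\<in>{w\<in>V. E v w}. M * d w)"
    by (rule sum_mono) (use xu in auto)
  finally have "\<bar>\<mu>\<bar> * (M * d v) \<le> d v * (M * d v) + M * (\<Sum>w\<in>{w\<in>V. E v w}. d w)"
    unfolding xv by (simp add: sum_distrib_left)
  then have "M * (\<bar>\<mu>\<bar> * d v) \<le> M * (d v * d v + (\<Sum>w\<in>{w\<in>V. E v w}. d w))"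
    by (simp add: algebra_simps)
  then have "\<bar>\<mu>\<bar> * d v \<le> d v * d v + (\<Sum>w\<in>{w\<in>V. E v w}. d w)"
    using Mp by (simp add: mult_le_cancel_left_pos)
  then show ?thesis using vV unfolding d_def by blast
qed


lemma deg_le_n1: assumes g: "graph V E" shows "Defs.degree V E w \<le> card V - 1"
proof (cases "w \<in> V")
  case True
  have fin: "finite V" using g unfolding Defs.graph_def by auto
  have "{y\<in>V. E w y} \<subseteq> V - {w}" using g unfolding Defs.graph_def by auto
  then have "card {y\<in>V. E w y} \<le> card (V - {w})" using fin by (intro card_mono) auto
  then show ?thesis using True fin by (simp add: Defs.degree_def)
next
  case False
  have "{y\<in>V. E w y} = {}" using g False unfolding Defs.graph_def by auto
  then have "card {y\<in>V. E w y} = 0" by (simp only: card.empty)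
  then show ?thesis by (simp add: Defs.degree_def)
qed

lemma eig_bound:
  assumes g: "graph V E" and dmin: "\<forall>x\<in>V. \<delta> \<le> Defs.degree V E x" and d1: "1 \<le> \<delta>"
    and S: "real (\<Sum>x\<in>V. Defs.degree V E x) \<le> (real (card V) - 1) * (real (card V) - 2 * real \<delta> + 2)"
    and ev: "Q_eigenvalue V E \<mu>"
  shows "\<mu> \<le> 2 * (real (card V) - real \<delta>)"
proof -
  have fin: "finite V" using g unfolding Defs.graph_def by auto
  have dpos: "\<forall>v\<in>V. 0 < Defs.degree V E v"
  proof
    fix v assume "v \<in> V"
    then have "\<delta> \<le> Defs.degree V E v" using dmin by auto
    then show "0 < Defs.degree V E v" using d1 by linarith
  qed
  obtain v where vV: "v \<in> V" and h: "\<bar>\<mu>\<bar> * real (Defs.degree V E v)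
          \<le> real (Defs.degree V E v) * real (Defs.degree V E v) + (\<Sum>w\<in>{w\<in>V. E v w}. real (Defs.degree V E w))"
    using collatz[OF g dpos ev] by blast
  define N where "N = {w\<in>V. E v w}"
  define R where "R = V - N - {v}"
  define n where "n = real (card V)"
  define d where "d = real (Defs.degree V E v)"
  define SN where "SN = (\<Sum>w\<in>N. real (Defs.degree V E w))"
  have finN: "finite N" "finite R" using fin by (auto simp: N_def R_def)
  have vN: "v \<notin> N" using g unfolding Defs.graph_def N_def by auto
  have Vs: "V = insert v (N \<union> R)" using vV by (auto simp: N_def R_def)
  have NR: "N \<inter> R = {}" by (auto simp: R_def)
  have cN: "card N = Defs.degree V E v" by (simp add: N_def Defs.degree_def)
  have cV: "card V = 1 + card N + card R"
  proof -
    have "card V = card (insert v (N \<union> R))" using Vs by simp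
    also have "\<dots> = 1 + card (N \<union> R)" using finN vN by (simp add: R_def)
    also have "card (N \<union> R) = card N + card R" using finN NR by (simp add: card_Un_disjoint)
    finally show ?thesis by simp
  qed
  define f where "f w = real (Defs.degree V E w)" for w
  have Ssplit: "(\<Sum>w\<in>V. f w) = f v + (\<Sum>w\<in>N. f w) + (\<Sum>w\<in>R. f w)"
  proof -
    have "sum f V = sum f (insert v (N \<union> R))" using Vs by (rule arg_cong)
    also have "\<dots> = f v + sum f (N \<union> R)" using finN vN by (simp add: R_def)
    also have "sum f (N \<union> R) = sum f N + sum f R" using finN NR by (simp add: sum.union_disjoint)
    finally show ?thesis by simp
  qed
  have Rge: "real (card R) * real \<delta> \<le> (\<Sum>w\<in>R. f w)"
    using sum_bounded_below[of R "real \<delta>" f] dmin unfolding f_def by (auto simp: R_def)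
  have Nle: "(\<Sum>w\<in>N. f w) \<le> real (card N) * (n - 1)"
  proof -
    have "(\<Sum>w\<in>N. f w) \<le> real (card N) * real (card V - 1)"
      using sum_bounded_above[of N f "real (card V - 1)"] deg_le_n1[OF g] unfolding f_def by auto
    moreover have "real (card V - 1) = n - 1"
    proof -
      have "0 < card V" using vV fin by (auto simp: card_gt_0_iff)
      then show ?thesis unfolding n_def by (simp add: of_nat_diff)
    qed
    ultimately show ?thesis by simp
  qed
  have Sr: "(\<Sum>w\<in>V. f w) = real (\<Sum>x\<in>V. Defs.degree V E x)" unfolding f_def by simp
  have hd: "\<bar>\<mu>\<bar> * d \<le> d * d + SN" using h unfolding d_def SN_def N_def .
  have SNf: "SN = (\<Sum>w\<in>N. f w)" unfolding SN_def f_def ..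
  have nr: "n = 1 + d + real (card R)" using cV cN unfolding n_def d_def by simp
  have dp: "0 < d" using dpos vV unfolding d_def by simp
  have dn: "d \<le> n - 1" using nr by simp
  have dd: "real \<delta> \<le> d" using dmin vV unfolding d_def by simp
  have key: "\<bar>\<mu>\<bar> * d \<le> 2 * (n - real \<delta>) * d"
  proof (cases "d \<le> n - 2 * real \<delta> + 1")
    case True
    have "SN \<le> d * (n - 1)" using Nle SNf cN unfolding d_def by simp
    then have "\<bar>\<mu>\<bar> * d \<le> d * (d + n - 1)" using hd by (simp add: algebra_simps)
    also have "\<dots> \<le> d * (2 * (n - real \<delta>))" using True dp by (intro mult_left_mono) auto
    finally show ?thesis by (simp add: algebra_simps)
  next
    case False
    have Sle: "f v + SN + real (card R) * real \<delta> \<le> (n - 1) * (n - 2 * real \<delta> + 2)"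
      using Ssplit Sr S Rge SNf unfolding n_def by linarith
    have fv: "f v = d" unfolding f_def d_def ..
    have cR: "real (card R) = n - 1 - d" using nr by simp
    have SN2: "SN \<le> (n - 1) * (n - 2 * real \<delta> + 2) - d - (n - 1 - d) * real \<delta>"
      using Sle fv cR by simp
    have prod: "(d - (n - 1)) * (d - (n - 3 * real \<delta> + 2)) \<le> 0"
      using dn False by (intro mult_nonpos_nonneg) auto
    have "\<bar>\<mu>\<bar> * d \<le> d * d + (n - 1) * (n - 2 * real \<delta> + 2) - d - (n - 1 - d) * real \<delta>"
      using hd SN2 by linarith
    also have "\<dots> \<le> 2 * (n - real \<delta>) * d" using prod by (simp add: algebra_simps)
    finally show ?thesis .
  qed
  then have "\<bar>\<mu>\<bar> \<le> 2 * (n - real \<delta>)" using dp by (simp add: mult_le_cancel_right_pos)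
  then show ?thesis unfolding n_def by simp
qed




lemma ext_root:
  fixes n d :: nat
  assumes d2: "2 \<le> d" and nd: "2 * d \<le> n"
  shows "\<exists>\<mu>. 2 * real n - 2 * real d < \<mu> \<and>
     \<mu> - real n - real d + 2 = (real n - 2 * real d + 1) * (real d / (\<mu> - 2 * real n + 3 * real d))
        + (real d - 1) * (real d / (\<mu> - real d))"
proof -
  define g where "g \<mu> = \<mu> - real n - real d + 2 - (real n - 2 * real d + 1) * (real d / (\<mu> - 2 * real n + 3 * real d))
        - (real d - 1) * (real d / (\<mu> - real d))" for \<mu>
  define a where "a = 2 * real n - 2 * real d"
  define b where "b = 2 * real n"
  have dR: "2 \<le> real d" "2 * real d \<le> real n" using d2 nd by simp_all
  have ab: "a \<le> b" unfolding a_def b_def by simp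
  have cont: "continuous_on {a..b} g"
  proof -
    have "\<And>\<mu>. \<mu> \<in> {a..b} \<Longrightarrow> \<mu> - 2 * real n + 3 * real d \<noteq> 0 \<and> \<mu> - real d \<noteq> 0"
      using dR unfolding a_def by auto
    then show ?thesis unfolding g_def by (intro continuous_intros) auto
  qed
  have ga: "g a < 0"
  proof -
    have q1: "real d / (a - 2 * real n + 3 * real d) = 1" using dR unfolding a_def by simp
    have pos: "0 < a - real d" using dR unfolding a_def by simp
    define T where "T = (real d - 1) * (real d / (a - real d))"
    have Tp: "0 < T" unfolding T_def using dR pos by (intro mult_pos_pos divide_pos_pos) auto
    have gae: "g a = 1 - real d - T"
      unfolding g_def q1 T_def unfolding a_def by simp
    show ?thesis using Tp gae dR by linarith
  qed
  have gb: "0 < g b"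
  proof -
    have q1: "real d / (b - 2 * real n + 3 * real d) = 1/3" using dR unfolding b_def by simp
    have pos: "real d \<le> b - real d" using dR unfolding b_def by simp
    have "real d / (b - real d) \<le> 1" using pos dR by (simp add: divide_le_eq)
    then have Tle: "(real d - 1) * (real d / (b - real d)) \<le> real d - 1"
      by (rule mult_left_le) (use dR in auto)
    define T where "T = (real d - 1) * (real d / (b - real d))"
    have gbe: "g b = 2 * real n - real n - real d + 2 - (real n - 2 * real d + 1) / 3 - T"
      unfolding g_def q1 T_def unfolding b_def by simp
    have "T \<le> real d - 1" using Tle unfolding T_def .
    then show ?thesis using gbe dR by argo
  qed
  obtain \<mu> where mu: "a \<le> \<mu>" "\<mu> \<le> b" "g \<mu> = 0"
    using IVT'[of g a 0 b] ga gb ab cont by auto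
  have "\<mu> \<noteq> a" using ga mu by auto
  then have "a < \<mu>" using mu by simp
  then show ?thesis using mu(3) unfolding g_def a_def by (intro exI[of _ \<mu>]) simp
qed


lemma ext_eig:
  fixes n d :: nat
  assumes d2: "2 \<le> d" and nd: "2 * d \<le> n"
  shows "\<exists>\<mu>. 2 * real n - 2 * real d < \<mu> \<and> Q_eigenvalue (extremal_V n) (extremal_E n d) \<mu>"
proof -
  obtain \<mu> where mu: "2 * real n - 2 * real d < \<mu>" and root: "\<mu> - real n - real d + 2 =
       (real n - 2 * real d + 1) * (real d / (\<mu> - 2 * real n + 3 * real d))
        + (real d - 1) * (real d / (\<mu> - real d))"
    using ext_root[OF d2 nd] by blast
  define q where "q = real d / (\<mu> - 2 * real n + 3 * real d)"
  define r where "r = real d / (\<mu> - real d)"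
  have dR: "2 \<le> real d" "2 * real d \<le> real n" using d2 nd by simp_all
  have qe: "(\<mu> - 2 * real n + 3 * real d) * q = real d" unfolding q_def using mu dR by simp
  have re: "(\<mu> - real d) * r = real d" unfolding r_def using mu dR by simp
  define m where "m = n + 1 - d"
  have mn: "n - d + 1 = m" "d \<le> m" "m \<le> n" using nd d2 by (auto simp: m_def)
  define x where "x j = (if j < d then 1 else if j < m then q else r)" for j
  let ?V = "extremal_V n" and ?E = "extremal_E n d"
  have Vdef: "?V = {0..<n}" by (simp add: Defs.extremal_V_def)
  have Edef: "\<And>i j. ?E i j \<longleftrightarrow> i < n \<and> j < n \<and> i \<noteq> j \<and> (i < d \<or> j < d \<or> (i < m \<and> j < m))"
    unfolding Defs.extremal_E_def using mn by simp
  have s1: "(\<Sum>j\<in>{0..<d}. x j) = real d" by (simp add: x_def)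
  have s2: "(\<Sum>j\<in>{d..<m}. x j) = real (m - d) * q"
  proof -
    have "(\<Sum>j\<in>{d..<m}. x j) = (\<Sum>j\<in>{d..<m}. q)" by (rule sum.cong) (auto simp: x_def)
    then show ?thesis by simp
  qed
  have s3: "(\<Sum>j\<in>{m..<n}. x j) = real (n - m) * r"
  proof -
    have "(\<Sum>j\<in>{m..<n}. x j) = (\<Sum>j\<in>{m..<n}. r)" using mn by (intro sum.cong) (auto simp: x_def)
    then show ?thesis by simp
  qed
  have sm: "(\<Sum>j\<in>{0..<m}. x j) = real d + real (m - d) * q"
    using sum.atLeastLessThan_concat[of 0 d m x] mn s1 s2 by simp
  have sn: "(\<Sum>j\<in>{0..<n}. x j) = real d + real (m - d) * q + real (n - m) * r"
    using sum.atLeastLessThan_concat[of 0 m n x] mn sm s3 by simp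
  have md: "real (m - d) = real n - 2 * real d + 1" using mn nd unfolding m_def by (simp add: of_nat_diff)
  have nm: "real (n - m) = real d - 1" using mn nd d2 unfolding m_def by (simp add: of_nat_diff)
  have fin: "finite ?V" by (simp add: Vdef)
  have eq: "(\<Sum>w\<in>?V. signless_laplacian ?V ?E i w * x w) = \<mu> * x i" if i: "i \<in> ?V" for i
  proof -
    have row: "(\<Sum>w\<in>?V. signless_laplacian ?V ?E i w * x w)
       = real (Defs.degree ?V ?E i) * x i + (\<Sum>w\<in>{w\<in>?V. ?E i w}. x w)"
      by (rule eig_row[OF fin i])
    have iN: "i < n" using i Vdef by simp
    consider "i < d" | "d \<le> i" "i < m" | "m \<le> i" by linarith
    then show ?thesis
    proof cases
      case 1
      have N: "{w\<in>?V. ?E i w} = {0..<n} - {i}" using 1 iN unfolding Vdef Edef by auto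
      have dg: "Defs.degree ?V ?E i = n - 1" unfolding Defs.degree_def N using iN by simp
      have sN: "(\<Sum>w\<in>{0..<n} - {i}. x w) = (\<Sum>w\<in>{0..<n}. x w) - x i"
        using sum.remove[of "{0..<n}" i x] iN by simp
      have xi: "x i = 1" using 1 by (simp add: x_def)
      have rn: "real (n - 1) = real n - 1" using iN by (simp add: of_nat_diff)
      show ?thesis unfolding row N dg sN sn xi rn md nm using root unfolding q_def[symmetric] r_def[symmetric]
        by (simp add: algebra_simps)
    next
      case 2
      have N: "{w\<in>?V. ?E i w} = {0..<m} - {i}" using 2 iN mn unfolding Vdef Edef by auto
      have dg: "Defs.degree ?V ?E i = m - 1" unfolding Defs.degree_def N using 2 by simp
      have sN: "(\<Sum>w\<in>{0..<m} - {i}. x w) = (\<Sum>w\<in>{0..<m}. x w) - x i"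
        using sum.remove[of "{0..<m}" i x] 2 by simp
      have xi: "x i = q" using 2 by (simp add: x_def)
      have rm: "real (m - 1) = real n - real d" using 2 mn unfolding m_def by (simp add: of_nat_diff)
      show ?thesis unfolding row N dg sN sm xi rm md using qe by (simp add: algebra_simps)
    next
      case 3
      have N: "{w\<in>?V. ?E i w} = {0..<d}" using 3 iN mn unfolding Vdef Edef by auto
      have dg: "Defs.degree ?V ?E i = d" unfolding Defs.degree_def N by simp
      have xi: "x i = r" using 3 mn by (simp add: x_def)
      show ?thesis unfolding row N dg s1 xi using re by (simp add: algebra_simps)
    qed
  qed
  have "0 \<in> ?V" using nd d2 Vdef by simp
  moreover have "x 0 \<noteq> 0" using d2 by (simp add: x_def)
  ultimately have "Q_eigenvalue ?V ?E \<mu>" unfolding Defs.Q_eigenvalue_def using eq by blast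
  then show ?thesis using mu by blast
qed


theorem theorem1p1:
  fixes V :: "'a set" and E :: "'a \<Rightarrow> 'a \<Rightarrow> bool" and \<delta> n :: nat
  assumes "graph V E"
    and "connected_graph V E"
    and "\<delta> \<ge> 2"
    and "card V = n" and "even n"
    and "min_degree V E = \<delta>"
    and "real n \<ge> max (7 * real \<delta> - 7) ((real \<delta>)\<^sup>2 / 4 + real \<delta> / 2 + 6)"
    and "rho_Q V E \<ge> rho_Q (extremal_V n) (extremal_E n \<delta>)"
    and "\<not> graph_iso V E (extremal_V n) (extremal_E n \<delta>)"
  shows "has_even_factor V E"
proof -
  note g = assms(1)
  note gd = graphD[OF g]
  have fin: "finite V" by (rule gd(1))
  have Esym: "\<And>x y. E x y \<Longrightarrow> E y x" using gd(5) by blast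
  have ne: "V \<noteq> {}" using assms(2) unfolding Defs.connected_graph_def by blast
  have d2: "2 \<le> \<delta>" using assms(3) by simp
  have dmin: "\<forall>x\<in>V. \<delta> \<le> Defs.degree V E x"
  proof
    fix x assume x: "x \<in> V"
    have "Min (Defs.degree V E ` V) \<le> Defs.degree V E x" using fin x by (intro Min_le) auto
    then show "\<delta> \<le> Defs.degree V E x" using assms(6) unfolding Defs.min_degree_def by simp
  qed
  have nR: "7 * real \<delta> - 7 \<le> real n" using assms(7) by simp
  have n7: "7 * int \<delta> - 7 \<le> int (card V)"
  proof -
    have "real_of_int (7 * int \<delta> - 7) \<le> real_of_int (int n)" using nR by simp
    then show ?thesis using assms(4) by linarith
  qed
  have nd: "2 * \<delta> \<le> n"
  proof -
    have "2 * real \<delta> \<le> real n" using nR d2 by linarith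
    then show ?thesis by linarith
  qed
  obtain \<mu>0 where mu0: "2 * real n - 2 * real \<delta> < \<mu>0"
    and ev0: "Q_eigenvalue (extremal_V n) (extremal_E n \<delta>) \<mu>0"
    using ext_eig[OF d2 nd] by blast
  have finX: "finite (extremal_V n)" by (simp add: Defs.extremal_V_def)
  have neX: "extremal_V n \<noteq> {}" using nd d2 by (auto simp: Defs.extremal_V_def)
  have symX: "\<And>x y. extremal_E n \<delta> x y \<Longrightarrow> extremal_E n \<delta> y x"
    unfolding Defs.extremal_E_def by auto
  have "\<mu>0 \<le> rho_Q (extremal_V n) (extremal_E n \<delta>)"
    using rho_props(2)[of "extremal_V n" "extremal_E n \<delta>", OF finX neX symX ev0] .
  then have rho_big: "2 * real n - 2 * real \<delta> < rho_Q V E" using mu0 assms(8) by linarith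
  have evG: "Q_eigenvalue V E (rho_Q V E)" using rho_props(1)[of V E, OF fin ne Esym] .
  have Sr: "(real (card V) - 1) * (real (card V) - 2 * real \<delta> + 2) < real (\<Sum>x\<in>V. Defs.degree V E x)"
  proof (rule ccontr)
    assume "\<not> ?thesis"
    then have "real (\<Sum>x\<in>V. Defs.degree V E x) \<le> (real (card V) - 1) * (real (card V) - 2 * real \<delta> + 2)"
      by linarith
    then have "rho_Q V E \<le> 2 * (real (card V) - real \<delta>)"
      using eig_bound[OF g dmin _ _ evG] d2 by simp
    then show False using rho_big assms(4) by simp
  qed
  have Si: "(int (card V) - 1) * (int (card V) - 2 * int \<delta> + 2) < int (\<Sum>x\<in>V. Defs.degree V E x)"
  proof -
    have "real_of_int ((int (card V) - 1) * (int (card V) - 2 * int \<delta> + 2))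
        < real_of_int (int (\<Sum>x\<in>V. Defs.degree V E x))" using Sr by simp
    then show ?thesis by (simp only: of_int_less_iff)
  qed
  show ?thesis by (rule comb_main[OF g dmin d2 n7 Si])
qed

end
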